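(* Let $N\ge 1$, $c\in\mathbb{R}$, and consider the manifold of Jacobi parameters $a_1,\dots,a_{N-1}>0$, $b_1,\dots,b_N\in\mathbb{R}$ with $\sum_{j=1}^N b_j=c$, with the Poisson bracket described in the context. Let $P_n$ and $Q_n$ be the first and second kind monic polynomials defined in the context. Then for every $n=1,\dots,N$ and all $x,y$, \[ \{P_n(x),P_n(y)\}=\{Q_n(x),Q_n(y)\}=0, \] \[ 2\{P_n(x),Q_n(y)\} = -\frac{P_n(x)Q_n(y)-P_n(y)Q_n(x)}{x-y} + Q_n(x)Q_n(y). \]
   Context: The Poisson bracket on functions of $(a_1,\dots,a_{N-1},b_1,\dots,b_N)$ is the bilinear antisymmetric bracket satisfying the Leibniz rule whose only nonzero brackets among the coordinates are $\{b_k,a_k\}=-\tfrac14 a_k$ for $k=1,\dots,N-1$ and $\{b_k,a_{k-1}\}=\tfrac14 a_{k-1}$ for $k=2,\dots,N$. Brackets of functions depending on auxiliary variables $x,y$ are computed with $x,y$ held fixed. For $b_1,\dots,b_m$ and $a_1,\dots,a_{m-1}$ let $J(b_1,\dots,b_m;a_1,\dots,a_{m-1})$ be the $m\times m$ tridiagonal symmetric matrix with diagonal $b_1,\dots,b_m$ and off-diagonal entries $a_1,\dots,a_{m-1}$. Then $P_n(x)=\det\bigl(x-J(b_1,\dots,b_n;a_1,\dots,a_{n-1})\bigr)$ and $Q_n(x)=\det\bigl(x-J(b_2,\dots,b_n;a_2,\dots,a_{n-1})\bigr)$ (so $Q_1=1$). *)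

theory Defs
  imports Complex_Main "Jordan_Normal_Form.Determinant"
begin

text \<open>Coordinates: a, b :: nat => real, with a k the k-th off-diagonal Jacobi
parameter (k = 1..N-1) and b k the k-th diagonal one (k = 1..N).\<close>

definition jacobi_mat :: "nat \<Rightarrow> nat \<Rightarrow> (nat \<Rightarrow> real) \<Rightarrow> (nat \<Rightarrow> real) \<Rightarrow> real mat" where
  "jacobi_mat s m a b = mat m m (\<lambda>(i, j).
     if i = j then b (s + i + 1)
     else if i + 1 = j \<or> j + 1 = i then a (s + min i j + 1)
     else 0)"

definition jacobi_charpoly :: "nat \<Rightarrow> nat \<Rightarrow> (nat \<Rightarrow> real) \<Rightarrow> (nat \<Rightarrow> real) \<Rightarrow> real \<Rightarrow> real" where
  "jacobi_charpoly s m a b x = det (x \<cdot>\<^sub>m 1\<^sub>m m - jacobi_mat s m a b)"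

definition P_poly :: "nat \<Rightarrow> (nat \<Rightarrow> real) \<Rightarrow> (nat \<Rightarrow> real) \<Rightarrow> real \<Rightarrow> real" where
  "P_poly n a b x = jacobi_charpoly 0 n a b x"

definition Q_poly :: "nat \<Rightarrow> (nat \<Rightarrow> real) \<Rightarrow> (nat \<Rightarrow> real) \<Rightarrow> real \<Rightarrow> real" where
  "Q_poly n a b x = jacobi_charpoly 1 (n - 1) a b x"

definition rderiv :: "(real \<Rightarrow> real) \<Rightarrow> real \<Rightarrow> real" where
  "rderiv f x = (SOME D. (f has_real_derivative D) (at x))"

definition pd_a :: "nat \<Rightarrow> ((nat \<Rightarrow> real) \<Rightarrow> (nat \<Rightarrow> real) \<Rightarrow> real) \<Rightarrow> (nat \<Rightarrow> real) \<Rightarrow> (nat \<Rightarrow> real) \<Rightarrow> real" where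
  "pd_a k F a b = rderiv (\<lambda>t. F (a(k := t)) b) (a k)"

definition pd_b :: "nat \<Rightarrow> ((nat \<Rightarrow> real) \<Rightarrow> (nat \<Rightarrow> real) \<Rightarrow> real) \<Rightarrow> (nat \<Rightarrow> real) \<Rightarrow> (nat \<Rightarrow> real) \<Rightarrow> real" where
  "pd_b k F a b = rderiv (\<lambda>t. F a (b(k := t))) (b k)"

text \<open>The Poisson bracket determined (bilinearity, antisymmetry, Leibniz) by
 {b_k, a_k} = -a_k/4 (k=1..N-1), {b_k, a_{k-1}} = a_{k-1}/4 (k=2..N), all other
 coordinate brackets zero:  {F,G} = sum_{i,j} dF/dz_i dG/dz_j {z_i,z_j}.\<close>
definition poisson :: "nat \<Rightarrow> ((nat \<Rightarrow> real) \<Rightarrow> (nat \<Rightarrow> real) \<Rightarrow> real) \<Rightarrow> ((nat \<Rightarrow> real) \<Rightarrow> (nat \<Rightarrow> real) \<Rightarrow> real) \<Rightarrow> (nat \<Rightarrow> real) \<Rightarrow> (nat \<Rightarrow> real) \<Rightarrow> real" where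
  "poisson N F G a b =
     (\<Sum>k=1..N-1. (- a k / 4) * (pd_b k F a b * pd_a k G a b - pd_a k F a b * pd_b k G a b))
   + (\<Sum>k=2..N. (a (k-1) / 4) * (pd_b k F a b * pd_a (k-1) G a b - pd_a (k-1) F a b * pd_b k G a b))"

end

theory Submission imports Defs begin

fun pp :: "nat \<Rightarrow> nat \<Rightarrow> (nat\<Rightarrow>real) \<Rightarrow> (nat\<Rightarrow>real) \<Rightarrow> real \<Rightarrow> real" where
  "pp s 0 a b x = 1"
| "pp s (Suc 0) a b x = x - b (Suc s)"
| "pp s (Suc (Suc m)) a b x = (x - b (Suc s)) * pp (Suc s) (Suc m) a b x
      - (a (Suc s))^2 * pp (Suc (Suc s)) m a b x"

lemma charpoly_pp: "jacobi_charpoly s m a b x = pp s m a b x"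
proof (induction s m a b x rule: pp.induct)
  case (1 s a b x)
  have "x \<cdot>\<^sub>m 1\<^sub>m 0 - jacobi_mat s 0 a b = 1\<^sub>m 0"
    by (rule eq_matI) (auto simp: jacobi_mat_def)
  then show ?case by (simp add: jacobi_charpoly_def)
next
  case (2 s a b x)
  have "x \<cdot>\<^sub>m 1\<^sub>m 1 - jacobi_mat s 1 a b = mat 1 1 (\<lambda>_. x - b (Suc s))"
    by (rule eq_matI) (auto simp: jacobi_mat_def)
  then show ?case by (simp add: jacobi_charpoly_def det_single)
next
  case (3 s m a b x)
  define n where "n = Suc (Suc m)"
  define A where "A = x \<cdot>\<^sub>m 1\<^sub>m n - jacobi_mat s n a b"
  have dA: "dim_row A = n" "dim_col A = n" by (simp_all add: A_def jacobi_mat_def)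
  have Ac: "A \<in> carrier_mat n n" by (rule carrier_matI) (simp_all only: dA)
  have Ae: "A $$ (i, j) = (if i = j then x - b (s + i + 1) else if i + 1 = j \<or> j + 1 = i then - a (s + min i j + 1) else 0)"
    if "i < n" "j < n" for i j
    using that unfolding A_def jacobi_mat_def by simp
  have d00: "mat_delete A 0 0 = x \<cdot>\<^sub>m 1\<^sub>m (Suc m) - jacobi_mat (Suc s) (Suc m) a b"
  proof (rule eq_matI)
    fix i j assume ij: "i < dim_row (x \<cdot>\<^sub>m 1\<^sub>m (Suc m) - jacobi_mat (Suc s) (Suc m) a b)"
      "j < dim_col (x \<cdot>\<^sub>m 1\<^sub>m (Suc m) - jacobi_mat (Suc s) (Suc m) a b)"
    then have ij': "i < Suc m" "j < Suc m" by (simp_all add: jacobi_mat_def)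
    have "mat_delete A 0 0 $$ (i, j) = A $$ (Suc i, Suc j)"
      using ij' dA by (simp add: mat_delete_def n_def)
    also have "\<dots> = (x \<cdot>\<^sub>m 1\<^sub>m (Suc m) - jacobi_mat (Suc s) (Suc m) a b) $$ (i, j)"
      using ij' by (simp add: Ae n_def jacobi_mat_def)
    finally show "mat_delete A 0 0 $$ (i, j) = (x \<cdot>\<^sub>m 1\<^sub>m (Suc m) - jacobi_mat (Suc s) (Suc m) a b) $$ (i, j)" .
  qed (simp_all add: dA jacobi_mat_def n_def)
  define B where "B = mat_delete A 0 1"
  have dB: "dim_row B = Suc m" "dim_col B = Suc m" by (simp_all add: B_def dA n_def)
  have Bc: "B \<in> carrier_mat (Suc m) (Suc m)" by (rule carrier_matI) (simp_all only: dB)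
  have Bi: "B $$ (i, j) = A $$ (Suc i, if j < 1 then j else Suc j)" if "i < Suc m" "j < Suc m" for i j
    using that dA by (simp add: B_def mat_delete_def n_def)
  have Be: "B $$ (i, 0) = (if i = 0 then - a (Suc s) else 0)" if "i < Suc m" for i
    using that by (simp add: Bi Ae n_def)
  have dB0: "mat_delete B 0 0 = x \<cdot>\<^sub>m 1\<^sub>m m - jacobi_mat (Suc (Suc s)) m a b"
  proof (rule eq_matI)
    fix i j assume ij: "i < dim_row (x \<cdot>\<^sub>m 1\<^sub>m m - jacobi_mat (Suc (Suc s)) m a b)"
      "j < dim_col (x \<cdot>\<^sub>m 1\<^sub>m m - jacobi_mat (Suc (Suc s)) m a b)"
    then have ij': "i < m" "j < m" by (simp_all add: jacobi_mat_def)
    have "mat_delete B 0 0 $$ (i, j) = B $$ (Suc i, Suc j)"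
      using ij' dB by (simp add: mat_delete_def)
    also have "\<dots> = A $$ (Suc (Suc i), Suc (Suc j))" using ij' by (simp add: Bi)
    also have "\<dots> = (x \<cdot>\<^sub>m 1\<^sub>m m - jacobi_mat (Suc (Suc s)) m a b) $$ (i, j)"
      using ij' by (simp add: Ae n_def jacobi_mat_def)
    finally show "mat_delete B 0 0 $$ (i, j) = (x \<cdot>\<^sub>m 1\<^sub>m m - jacobi_mat (Suc (Suc s)) m a b) $$ (i, j)" .
  qed (simp_all add: dB jacobi_mat_def)
  have "det B = (\<Sum>i<Suc m. B $$ (i,0) * cofactor B i 0)"
    by (rule laplace_expansion_column[OF Bc]) simp
  also have "\<dots> = (\<Sum>i\<in>{0}. B $$ (i,0) * cofactor B i 0)"
    by (rule sum.mono_neutral_right) (auto simp: Be)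
  also have "\<dots> = - a (Suc s) * pp (Suc (Suc s)) m a b x"
    using "3.IH"(2) by (simp add: Be cofactor_def dB0 jacobi_charpoly_def)
  finally have detB: "det B = - a (Suc s) * pp (Suc (Suc s)) m a b x" .
  have "det A = (\<Sum>j<n. A $$ (0,j) * cofactor A 0 j)"
    by (rule laplace_expansion_row[OF Ac]) (simp add: n_def)
  also have "\<dots> = (\<Sum>j\<in>{0,1}. A $$ (0,j) * cofactor A 0 j)"
    by (rule sum.mono_neutral_right) (auto simp: Ae n_def)
  also have "\<dots> = (x - b (Suc s)) * pp (Suc s) (Suc m) a b x
      - (a (Suc s))^2 * pp (Suc (Suc s)) m a b x"
    using "3.IH"(1) detB by (simp add: Ae n_def cofactor_def d00 jacobi_charpoly_def B_def power2_eq_square)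
  finally show ?case by (simp add: jacobi_charpoly_def A_def n_def)
qed


fun ga :: "nat \<Rightarrow> nat \<Rightarrow> nat \<Rightarrow> (nat\<Rightarrow>real) \<Rightarrow> (nat\<Rightarrow>real) \<Rightarrow> real \<Rightarrow> real" where
  "ga k s 0 a b x = 0"
| "ga k s (Suc 0) a b x = 0"
| "ga k s (Suc (Suc m)) a b x = (x - b (Suc s)) * ga k (Suc s) (Suc m) a b x
      - (if k = Suc s then 2 * a (Suc s) else 0) * pp (Suc (Suc s)) m a b x
      - (a (Suc s))^2 * ga k (Suc (Suc s)) m a b x"

fun gb :: "nat \<Rightarrow> nat \<Rightarrow> nat \<Rightarrow> (nat\<Rightarrow>real) \<Rightarrow> (nat\<Rightarrow>real) \<Rightarrow> real \<Rightarrow> real" where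
  "gb k s 0 a b x = 0"
| "gb k s (Suc 0) a b x = (if k = Suc s then -1 else 0)"
| "gb k s (Suc (Suc m)) a b x = (x - b (Suc s)) * gb k (Suc s) (Suc m) a b x
      - (if k = Suc s then pp (Suc s) (Suc m) a b x else 0)
      - (a (Suc s))^2 * gb k (Suc (Suc s)) m a b x"

lemma upd_deriv: "((\<lambda>t. (f(k:=t)) j) has_real_derivative (if k = j then 1 else 0)) (at z)"
  by (cases "k = j") auto

lemma pp_deriv_a: "((\<lambda>t. pp s m (a(k:=t)) b x) has_real_derivative ga k s m a b x) (at (a k))"
proof (induction s m a b x rule: pp.induct)
  case (3 s m a b x)
  have "((\<lambda>t. (x - b (Suc s)) * pp (Suc s) (Suc m) (a(k:=t)) b x
      - ((a(k:=t)) (Suc s))^2 * pp (Suc (Suc s)) m (a(k:=t)) b x) has_real_derivative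
      (x - b (Suc s)) * ga k (Suc s) (Suc m) a b x
      - ((of_nat 2 * ((if k = Suc s then 1 else 0) * ((a(k:=a k)) (Suc s))^(2 - Suc 0))) * pp (Suc (Suc s)) m (a(k:=a k)) b x
         + ga k (Suc (Suc s)) m a b x * ((a(k:=a k)) (Suc s))^2)) (at (a k))"
    by (intro DERIV_diff DERIV_cmult DERIV_mult DERIV_power upd_deriv 3)
  then show ?case unfolding pp.simps ga.simps
    by (rule DERIV_cong) (auto simp: algebra_simps)
qed auto

lemma pp_deriv_b: "((\<lambda>t. pp s m a (b(k:=t)) x) has_real_derivative gb k s m a b x) (at (b k))"
proof (induction s m a b x rule: pp.induct)
  case (2 s a b x)
  have "((\<lambda>t. x - (b(k:=t)) (Suc s)) has_real_derivative gb k s (Suc 0) a b x) (at (b k))"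
    by (rule DERIV_cong[OF DERIV_diff[OF DERIV_const upd_deriv]]) simp
  then show ?case by (simp only: pp.simps)
next
  case (3 s m a b x)
  have "((\<lambda>t. (x - (b(k:=t)) (Suc s)) * pp (Suc s) (Suc m) a (b(k:=t)) x
      - (a (Suc s))^2 * pp (Suc (Suc s)) m a (b(k:=t)) x) has_real_derivative
      (0 - (if k = Suc s then 1 else 0)) * pp (Suc s) (Suc m) a (b(k:=b k)) x
      + gb k (Suc s) (Suc m) a b x * (x - (b(k:=b k)) (Suc s))
      - (a (Suc s))^2 * gb k (Suc (Suc s)) m a b x) (at (b k))"
    by (intro DERIV_diff DERIV_cmult DERIV_mult DERIV_const upd_deriv 3)
  then show ?case unfolding pp.simps gb.simps
    by (rule DERIV_cong) (auto simp: algebra_simps)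
qed auto

lemma pd_a_pp: "pd_a k (\<lambda>a b. pp s m a b x) a b = ga k s m a b x"
  unfolding pd_a_def rderiv_def
  by (rule some_equality, rule pp_deriv_a, rule DERIV_unique, assumption, rule pp_deriv_a)

lemma pd_b_pp: "pd_b k (\<lambda>a b. pp s m a b x) a b = gb k s m a b x"
  unfolding pd_b_def rderiv_def
  by (rule some_equality, rule pp_deriv_b, rule DERIV_unique, assumption, rule pp_deriv_b)

lemma ga_zero: "k \<le> s \<or> s + m \<le> k \<Longrightarrow> ga k s m a b x = 0"
  by (induction k s m a b x rule: ga.induct) auto

lemma gb_zero: "k \<le> s \<or> s + m < k \<Longrightarrow> gb k s m a b x = 0"
  by (induction k s m a b x rule: gb.induct) auto

lemma gb_first: "gb (Suc s) s (Suc m) a b x = - pp (Suc s) m a b x"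
  by (cases m) (auto simp: gb_zero)


definition br :: "nat \<Rightarrow> (nat\<Rightarrow>real) \<Rightarrow> (nat\<Rightarrow>real) \<Rightarrow> (nat\<Rightarrow>real) \<Rightarrow> (nat\<Rightarrow>real) \<Rightarrow> (nat\<Rightarrow>real) \<Rightarrow> real" where
  "br N a fa fb ha hb =
     (\<Sum>k=1..N-1. (- a k / 4) * (fb k * ha k - fa k * hb k))
   + (\<Sum>k=2..N. (a (k-1) / 4) * (fb k * ha (k-1) - fa (k-1) * hb k))"

definition ee :: "nat \<Rightarrow> nat \<Rightarrow> real" where "ee j = (\<lambda>k. if k = j then 1 else 0)"
definition zz :: "nat \<Rightarrow> real" where "zz = (\<lambda>k. 0)"
definition GA where "GA a b s m x = (\<lambda>k. ga k s m a b x)"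
definition GB where "GB a b s m x = (\<lambda>k. gb k s m a b x)"

lemma poisson_pp: "poisson N (\<lambda>a b. pp s m a b x) (\<lambda>a b. pp s' m' a b y) a b
   = br N a (GA a b s m x) (GB a b s m x) (GA a b s' m' y) (GB a b s' m' y)"
  by (simp add: poisson_def br_def pd_a_pp pd_b_pp GA_def GB_def)

lemma br_antisym: "br N a fa fb ha hb = - br N a ha hb fa fb"
  by (simp add: br_def sum_negf[symmetric] algebra_simps)

lemma br_self: "br N a fa fb fa fb = 0"
  using br_antisym[of N a fa fb fa fb] by simp

lemma br_lin4: "br N a (\<lambda>k. c1 * f1 k - c2 * f2 k - c3 * f3 k - c4 * f4 k)
    (\<lambda>k. c1 * g1 k - c2 * g2 k - c3 * g3 k - c4 * g4 k) ha hb
  = c1 * br N a f1 g1 ha hb - c2 * br N a f2 g2 ha hb - c3 * br N a f3 g3 ha hb - c4 * br N a f4 g4 ha hb"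
proof -
  have e1: "(\<Sum>k\<in>A. T k) = c1 * (\<Sum>k\<in>A. T1 k) - c2 * (\<Sum>k\<in>A. T2 k) - c3 * (\<Sum>k\<in>A. T3 k) - c4 * (\<Sum>k\<in>A. T4 k)"
    if "\<And>k. T k = c1 * T1 k - c2 * T2 k - c3 * T3 k - c4 * T4 k" for A and T T1 T2 T3 T4 :: "nat \<Rightarrow> real"
    by (simp add: that sum_distrib_left sum_subtractf)
  have A: "(\<Sum>k=1..N-1. (- a k / 4) * ((c1 * g1 k - c2 * g2 k - c3 * g3 k - c4 * g4 k) * ha k - (c1 * f1 k - c2 * f2 k - c3 * f3 k - c4 * f4 k) * hb k)) = c1 * (\<Sum>k=1..N-1. (- a k / 4) * (g1 k * ha k - f1 k * hb k)) - c2 * (\<Sum>k=1..N-1. (- a k / 4) * (g2 k * ha k - f2 k * hb k)) - c3 * (\<Sum>k=1..N-1. (- a k / 4) * (g3 k * ha k - f3 k * hb k)) - c4 * (\<Sum>k=1..N-1. (- a k / 4) * (g4 k * ha k - f4 k * hb k))"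
    by (rule e1) (simp add: algebra_simps)
  have B: "(\<Sum>k=2..N. (a (k-1) / 4) * ((c1 * g1 k - c2 * g2 k - c3 * g3 k - c4 * g4 k) * ha (k-1) - (c1 * f1 (k-1) - c2 * f2 (k-1) - c3 * f3 (k-1) - c4 * f4 (k-1)) * hb k)) = c1 * (\<Sum>k=2..N. (a (k-1) / 4) * (g1 k * ha (k-1) - f1 (k-1) * hb k)) - c2 * (\<Sum>k=2..N. (a (k-1) / 4) * (g2 k * ha (k-1) - f2 (k-1) * hb k)) - c3 * (\<Sum>k=2..N. (a (k-1) / 4) * (g3 k * ha (k-1) - f3 (k-1) * hb k)) - c4 * (\<Sum>k=2..N. (a (k-1) / 4) * (g4 k * ha (k-1) - f4 (k-1) * hb k))"
    by (rule e1) (simp add: algebra_simps)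
  show ?thesis unfolding br_def A B by (simp add: algebra_simps)
qed

lemma sum_single: "finite A \<Longrightarrow> j \<in> A \<Longrightarrow> (\<And>k. k \<in> A \<Longrightarrow> k \<noteq> j \<Longrightarrow> f k = 0) \<Longrightarrow> sum f A = f j"
  by (simp add: sum.remove[of A j] sum.neutral)

lemma br_ee_zz: assumes "1 \<le> j" "j < N"
  shows "br N a (ee j) zz ha hb = a j / 4 * (hb j - hb (Suc j))"
proof -
  have s1: "(\<Sum>k=1..N-1. (- a k / 4) * (zz k * ha k - ee j k * hb k)) = (- a j / 4) * (0 - hb j)"
    using assms by (subst sum_single[of _ j]) (auto simp: ee_def zz_def)
  have s2: "(\<Sum>k=2..N. (a (k-1) / 4) * (zz k * ha (k-1) - ee j (k-1) * hb k)) = (a j / 4) * (0 - hb (Suc j))"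
    using assms by (subst sum_single[of _ "Suc j"]) (auto simp: ee_def zz_def)
  show ?thesis unfolding br_def s1 s2 by (simp add: algebra_simps)
qed

lemma br_zz_ee: assumes "ha j = 0" "ha (j-1) = 0"
  shows "br N a zz (ee j) ha hb = 0"
proof -
  have s1: "(\<Sum>k=1..N-1. (- a k / 4) * (ee j k * ha k - zz k * hb k)) = 0"
    using assms by (intro sum.neutral) (auto simp: ee_def zz_def)
  have s2: "(\<Sum>k=2..N. (a (k-1) / 4) * (ee j k * ha (k-1) - zz (k-1) * hb k)) = 0"
    using assms by (intro sum.neutral) (auto simp: ee_def zz_def)
  show ?thesis unfolding br_def s1 s2 by simp
qed

lemma exp1: "br N a (GA a b s (Suc (Suc m)) x) (GB a b s (Suc (Suc m)) x) ha hb =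
   (x - b (Suc s)) * br N a (GA a b (Suc s) (Suc m) x) (GB a b (Suc s) (Suc m) x) ha hb
 - (2 * a (Suc s) * pp (Suc (Suc s)) m a b x) * br N a (ee (Suc s)) zz ha hb
 - pp (Suc s) (Suc m) a b x * br N a zz (ee (Suc s)) ha hb
 - (a (Suc s))^2 * br N a (GA a b (Suc (Suc s)) m x) (GB a b (Suc (Suc s)) m x) ha hb"
proof -
  have 1: "GA a b s (Suc (Suc m)) x = (\<lambda>k. (x - b (Suc s)) * GA a b (Suc s) (Suc m) x k
     - (2 * a (Suc s) * pp (Suc (Suc s)) m a b x) * ee (Suc s) k
     - pp (Suc s) (Suc m) a b x * zz k - (a (Suc s))^2 * GA a b (Suc (Suc s)) m x k)"
    by (auto simp: GA_def ee_def zz_def fun_eq_iff)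
  have 2: "GB a b s (Suc (Suc m)) x = (\<lambda>k. (x - b (Suc s)) * GB a b (Suc s) (Suc m) x k
     - (2 * a (Suc s) * pp (Suc (Suc s)) m a b x) * zz k
     - pp (Suc s) (Suc m) a b x * ee (Suc s) k - (a (Suc s))^2 * GB a b (Suc (Suc s)) m x k)"
    by (auto simp: GB_def ee_def zz_def fun_eq_iff)
  show ?thesis unfolding 1 2 by (rule br_lin4)
qed


definition "PB N a b s m x s' m' y = br N a (GA a b s m x) (GB a b s m x) (GA a b s' m' y) (GB a b s' m' y)"

lemma main_step:
  fixes N :: nat and a b :: "nat \<Rightarrow> real" and s m :: nat
  assumes le: "s + Suc (Suc m) \<le> N"
    and Zp: "\<And>x y. PB N a b (Suc s) (Suc m) x (Suc s) (Suc m) y = 0"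
    and Zq: "\<And>x y. PB N a b (Suc (Suc s)) m x (Suc (Suc s)) m y = 0"
    and Cp: "\<And>x y. 2 * (x - y) * PB N a b (Suc s) (Suc m) x (Suc (Suc s)) m y =
        - (pp (Suc s) (Suc m) a b x * pp (Suc (Suc s)) m a b y - pp (Suc s) (Suc m) a b y * pp (Suc (Suc s)) m a b x)
        + (x - y) * pp (Suc (Suc s)) m a b x * pp (Suc (Suc s)) m a b y"
  shows "PB N a b s (Suc (Suc m)) x s (Suc (Suc m)) y = 0"
    and "2 * (x - y) * PB N a b s (Suc (Suc m)) x (Suc s) (Suc m) y =
        - (pp s (Suc (Suc m)) a b x * pp (Suc s) (Suc m) a b y - pp s (Suc (Suc m)) a b y * pp (Suc s) (Suc m) a b x)
        + (x - y) * pp (Suc s) (Suc m) a b x * pp (Suc s) (Suc m) a b y"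
proof -
  define j where "j = Suc s"
  have j1: "1 \<le> j" and jN: "j < N" using le by (auto simp: j_def)
  let ?al = "a (Suc s)"
  let ?be = "b (Suc s)"
  let ?u = "(a (Suc s))^2"
  let ?pa = "\<lambda>x. GA a b (Suc s) (Suc m) x" let ?pb = "\<lambda>x. GB a b (Suc s) (Suc m) x"
  let ?qa = "\<lambda>x. GA a b (Suc (Suc s)) m x" let ?qb = "\<lambda>x. GB a b (Suc (Suc s)) m x"
  let ?Pa = "\<lambda>x. GA a b s (Suc (Suc m)) x" let ?Pb = "\<lambda>x. GB a b s (Suc (Suc m)) x"
  let ?p = "\<lambda>x. pp (Suc s) (Suc m) a b x" let ?q = "\<lambda>x. pp (Suc (Suc s)) m a b x"
  have U1: "br N a (ee (Suc s)) zz (?pa y) (?pb y) = ?al / 4 * ?q y" for y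
    using br_ee_zz[OF j1 jN, of a "?pa y" "?pb y"] by (simp add: j_def GB_def gb_zero gb_first)
  have U2: "br N a (ee (Suc s)) zz (?qa y) (?qb y) = 0" for y
    using br_ee_zz[OF j1 jN, of a "?qa y" "?qb y"] by (simp add: j_def GB_def gb_zero)
  have U3: "br N a zz (ee (Suc s)) (?pa y) (?pb y) = 0" for y
    by (rule br_zz_ee) (simp_all add: GA_def ga_zero)
  have U4: "br N a zz (ee (Suc s)) (?qa y) (?qb y) = 0" for y
    by (rule br_zz_ee) (simp_all add: GA_def ga_zero)
  have U5: "br N a (ee (Suc s)) zz (ee (Suc s)) zz = 0"
    using br_ee_zz[OF j1 jN, of a "ee (Suc s)" zz] by (simp add: j_def zz_def)
  have U6: "br N a (ee (Suc s)) zz zz (ee (Suc s)) = ?al / 4"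
    using br_ee_zz[OF j1 jN, of a zz "ee (Suc s)"] by (simp add: j_def ee_def)
  have U7: "br N a zz (ee (Suc s)) zz (ee (Suc s)) = 0"
    by (rule br_zz_ee) (simp_all add: zz_def)
  have U8: "br N a zz (ee (Suc s)) (ee (Suc s)) zz = - (?al / 4)"
    using U6 br_antisym[of N a zz "ee (Suc s)" "ee (Suc s)" zz] by simp
  note E = exp1[of N a b s m]
  note AS = br_antisym[of N a]
  have PP: "pp s (Suc (Suc m)) a b x = (x - ?be) * ?p x - ?u * ?q x" for x by simp
  have L: "PB N a b s (Suc (Suc m)) x (Suc s) (Suc m) y =
      (x - ?be) * PB N a b (Suc s) (Suc m) x (Suc s) (Suc m) y
      - (2 * ?al * ?q x) * (?al / 4 * ?q y) - ?p x * 0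
      + ?u * PB N a b (Suc s) (Suc m) y (Suc (Suc s)) m x"
    unfolding PB_def E U1 U3 using AS[of "?qa x" "?qb x" "?pa y" "?pb y"] by simp
  have M: "2 * (y - x) * PB N a b (Suc s) (Suc m) y (Suc (Suc s)) m x =
        - (?p y * ?q x - ?p x * ?q y) + (y - x) * ?q y * ?q x" by (rule Cp)
  show "2 * (x - y) * PB N a b s (Suc (Suc m)) x (Suc s) (Suc m) y =
        - (pp s (Suc (Suc m)) a b x * pp (Suc s) (Suc m) a b y - pp s (Suc (Suc m)) a b y * pp (Suc s) (Suc m) a b x)
        + (x - y) * pp (Suc s) (Suc m) a b x * pp (Suc s) (Suc m) a b y"
  proof -
    have "2 * (x - y) * PB N a b s (Suc (Suc m)) x (Suc s) (Suc m) y -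
        (- (pp s (Suc (Suc m)) a b x * pp (Suc s) (Suc m) a b y - pp s (Suc (Suc m)) a b y * pp (Suc s) (Suc m) a b x)
        + (x - y) * pp (Suc s) (Suc m) a b x * pp (Suc s) (Suc m) a b y)
      = - ?u * (2 * (y - x) * PB N a b (Suc s) (Suc m) y (Suc (Suc s)) m x -
        (- (?p y * ?q x - ?p x * ?q y) + (y - x) * ?q y * ?q x))"
      unfolding L PP Zp by (simp add: field_simps power2_eq_square)
    then show ?thesis using M by simp
  qed
  show "PB N a b s (Suc (Suc m)) x s (Suc (Suc m)) y = 0"
  proof (cases "x = y")
    case True
    then show ?thesis by (simp add: PB_def br_self)
  next
    case False
    define Lxy where "Lxy = PB N a b (Suc s) (Suc m) x (Suc (Suc s)) m y"
    have Lsym: "PB N a b (Suc s) (Suc m) y (Suc (Suc s)) m x = Lxy"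
    proof -
      have "2 * (x - y) * (Lxy - PB N a b (Suc s) (Suc m) y (Suc (Suc s)) m x) = 0"
        using Cp[of x y] Cp[of y x] unfolding Lxy_def by (simp add: algebra_simps)
      then show ?thesis using False by simp
    qed
    have CL: "2 * (x - y) * Lxy = - (?p x * ?q y - ?p y * ?q x) + (x - y) * ?q x * ?q y"
      unfolding Lxy_def by (rule Cp)
    have W1: "br N a (?pa y) (?pb y) (ee (Suc s)) zz = - (?al / 4 * ?q y)" for y
      using AS[of "?pa y" "?pb y" "ee (Suc s)" zz] U1[of y] by simp
    have W2: "br N a (?qa y) (?qb y) (ee (Suc s)) zz = 0" for y
      using AS[of "?qa y" "?qb y" "ee (Suc s)" zz] U2[of y] by simp
    have W3: "br N a (?pa y) (?pb y) zz (ee (Suc s)) = 0" for y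
      using AS[of "?pa y" "?pb y" zz "ee (Suc s)"] U3[of y] by simp
    have W4: "br N a (?qa y) (?qb y) zz (ee (Suc s)) = 0" for y
      using AS[of "?qa y" "?qb y" zz "ee (Suc s)"] U4[of y] by simp
    have V1: "br N a (?pa y) (?pb y) (?pa x) (?pb x) = 0"
      using Zp[of y x] by (simp add: PB_def)
    have V4: "br N a (?qa y) (?qb y) (?pa x) (?pb x) = - Lxy"
      using AS[of "?qa y" "?qb y" "?pa x" "?pb x"] by (simp add: Lxy_def PB_def)
    have V5: "br N a (?pa y) (?pb y) (?qa x) (?qb x) = Lxy"
      using Lsym by (simp add: PB_def)
    have V6: "br N a (?qa y) (?qb y) (?qa x) (?qb x) = 0"
      using Zq[of y x] by (simp add: PB_def)
    have F1: "br N a (?pa x) (?pb x) (?Pa y) (?Pb y) = - ((y - ?be) * 0 - (2 * ?al * ?q y) * (?al / 4 * ?q x) - ?p y * 0 - ?u * (- Lxy))"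
      by (subst AS) (simp only: E V1 U1 U3 V4)
    have F2: "br N a (ee (Suc s)) zz (?Pa y) (?Pb y) = - ((y - ?be) * (- (?al / 4 * ?q y)) - (2 * ?al * ?q y) * 0 - ?p y * (- (?al / 4)) - ?u * 0)"
      by (subst AS) (simp only: E W1 U5 U8 W2)
    have F3: "br N a zz (ee (Suc s)) (?Pa y) (?Pb y) = - ((y - ?be) * 0 - (2 * ?al * ?q y) * (?al / 4) - ?p y * 0 - ?u * 0)"
      by (subst AS) (simp only: E W3 U6 U7 W4)
    have F4: "br N a (?qa x) (?qb x) (?Pa y) (?Pb y) = - ((y - ?be) * Lxy - (2 * ?al * ?q y) * 0 - ?p y * 0 - ?u * 0)"
      by (subst AS) (simp only: E V5 U2 U4 V6)
    have T: "PB N a b s (Suc (Suc m)) x s (Suc (Suc m)) y =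
       (x - ?be) * br N a (?pa x) (?pb x) (?Pa y) (?Pb y)
       - (2 * ?al * ?q x) * br N a (ee (Suc s)) zz (?Pa y) (?Pb y)
       - ?p x * br N a zz (ee (Suc s)) (?Pa y) (?Pb y)
       - ?u * br N a (?qa x) (?qb x) (?Pa y) (?Pb y)"
      unfolding PB_def E ..
    have "PB N a b s (Suc (Suc m)) x s (Suc (Suc m)) y = - ?u / 2 * (2 * (x - y) * Lxy - (- (?p x * ?q y - ?p y * ?q x) + (x - y) * ?q x * ?q y))"
      unfolding T F1 F2 F3 F4 by (simp add: field_simps power2_eq_square)
    then show ?thesis using CL by simp
  qed
qed


lemma main:
  fixes N m :: nat and a b :: "nat \<Rightarrow> real"
  shows "\<forall>s x y. s + m \<le> N \<longrightarrow> PB N a b s m x s m y = 0 \<and> (1 \<le> m \<longrightarrow>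
     2 * (x - y) * PB N a b s m x (Suc s) (m - 1) y =
       - (pp s m a b x * pp (Suc s) (m - 1) a b y - pp s m a b y * pp (Suc s) (m - 1) a b x)
       + (x - y) * pp (Suc s) (m - 1) a b x * pp (Suc s) (m - 1) a b y)"
proof (induction m rule: less_induct)
  case (less m)
  show ?case
  proof (cases m)
    case 0
    then show ?thesis by (simp add: PB_def br_def GA_def GB_def)
  next
    case (Suc m1)
    show ?thesis
    proof (cases m1)
      case 0
      then show ?thesis using Suc by (simp add: PB_def br_def GA_def GB_def)
    next
      case (Suc m2)
      have m: "m = Suc (Suc m2)" using Suc \<open>m = Suc m1\<close> by simp
      show ?thesis
      proof (intro allI impI)
        fix s x y assume le: "s + m \<le> N"
        have IH1: "\<forall>s x y. s + Suc m2 \<le> N \<longrightarrow> PB N a b s (Suc m2) x s (Suc m2) y = 0 \<and> (1 \<le> Suc m2 \<longrightarrow>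
           2 * (x - y) * PB N a b s (Suc m2) x (Suc s) (Suc m2 - 1) y =
             - (pp s (Suc m2) a b x * pp (Suc s) (Suc m2 - 1) a b y - pp s (Suc m2) a b y * pp (Suc s) (Suc m2 - 1) a b x)
             + (x - y) * pp (Suc s) (Suc m2 - 1) a b x * pp (Suc s) (Suc m2 - 1) a b y)"
          using less.IH[of "Suc m2"] m by simp
        have IH0: "\<forall>s x y. s + m2 \<le> N \<longrightarrow> PB N a b s m2 x s m2 y = 0"
          using less.IH[of m2] m by simp
        have le1: "Suc s + Suc m2 \<le> N" and le0: "Suc (Suc s) + m2 \<le> N" using le m by auto
        have h1: "s + Suc (Suc m2) \<le> N" using le m by simp
        have h2: "PB N a b (Suc s) (Suc m2) x' (Suc s) (Suc m2) y' = 0" for x' y'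
            using IH1 le1 by blast
        have h3: "PB N a b (Suc (Suc s)) m2 x' (Suc (Suc s)) m2 y' = 0" for x' y'
            using IH0 le0 by blast
        have h4: "2 * (x' - y') * PB N a b (Suc s) (Suc m2) x' (Suc (Suc s)) m2 y' =
            - (pp (Suc s) (Suc m2) a b x' * pp (Suc (Suc s)) m2 a b y' - pp (Suc s) (Suc m2) a b y' * pp (Suc (Suc s)) m2 a b x')
            + (x' - y') * pp (Suc (Suc s)) m2 a b x' * pp (Suc (Suc s)) m2 a b y'" for x' y'
            using IH1 le1 by simp
        note r = main_step(1)[OF h1 h2 h3 h4, of x y] main_step(2)[OF h1 h2 h3 h4, of x y]
        then show "PB N a b s m x s m y = 0 \<and> (1 \<le> m \<longrightarrow>
         2 * (x - y) * PB N a b s m x (Suc s) (m - 1) y =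
           - (pp s m a b x * pp (Suc s) (m - 1) a b y - pp s m a b y * pp (Suc s) (m - 1) a b x)
           + (x - y) * pp (Suc s) (m - 1) a b x * pp (Suc s) (m - 1) a b y)"
          using m by simp
      qed
    qed
  qed
qed

theorem theorem2p4:
  fixes N n :: nat and c x y :: real and a b :: "nat \<Rightarrow> real"
  assumes "N \<ge> 1"
    and "\<forall>k\<in>{1..N-1}. a k > 0"
    and "(\<Sum>j=1..N. b j) = c"
    and "1 \<le> n" and "n \<le> N"
  shows "poisson N (\<lambda>a b. P_poly n a b x) (\<lambda>a b. P_poly n a b y) a b = 0
     \<and> poisson N (\<lambda>a b. Q_poly n a b x) (\<lambda>a b. Q_poly n a b y) a b = 0
     \<and> (x \<noteq> y \<longrightarrow>
          2 * poisson N (\<lambda>a b. P_poly n a b x) (\<lambda>a b. Q_poly n a b y) a b =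
            - (P_poly n a b x * Q_poly n a b y - P_poly n a b y * Q_poly n a b x) / (x - y)
            + Q_poly n a b x * Q_poly n a b y)"
proof -
  have Pf: "(\<lambda>a b. P_poly n a b z) = (\<lambda>a b. pp 0 n a b z)" for z
    by (simp add: P_poly_def charpoly_pp)
  have Qf: "(\<lambda>a b. Q_poly n a b z) = (\<lambda>a b. pp (Suc 0) (n - 1) a b z)" for z
    by (simp add: Q_poly_def charpoly_pp)
  have Pv: "P_poly n a b z = pp 0 n a b z" for z by (simp add: P_poly_def charpoly_pp)
  have Qv: "Q_poly n a b z = pp (Suc 0) (n - 1) a b z" for z by (simp add: Q_poly_def charpoly_pp)
  have M0: "PB N a b 0 n x 0 n y = 0 \<and> (1 \<le> n \<longrightarrow>
     2 * (x - y) * PB N a b 0 n x (Suc 0) (n - 1) y =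
       - (pp 0 n a b x * pp (Suc 0) (n - 1) a b y - pp 0 n a b y * pp (Suc 0) (n - 1) a b x)
       + (x - y) * pp (Suc 0) (n - 1) a b x * pp (Suc 0) (n - 1) a b y)"
    using main[of n N a b] assms by simp
  have M1: "PB N a b (Suc 0) (n - 1) x (Suc 0) (n - 1) y = 0"
    using main[of "n - 1" N a b] assms by simp
  have C: "2 * PB N a b 0 n x (Suc 0) (n - 1) y =
     - (pp 0 n a b x * pp (Suc 0) (n - 1) a b y - pp 0 n a b y * pp (Suc 0) (n - 1) a b x) / (x - y)
     + pp (Suc 0) (n - 1) a b x * pp (Suc 0) (n - 1) a b y" if "x \<noteq> y"
  proof -
    have "x - y \<noteq> 0" using that by simp
    then show ?thesis using M0 assms(4)
      by (simp add: field_simps)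
  qed
  show ?thesis
    unfolding Pf Qf Pv Qv poisson_pp PB_def[symmetric] using M0 M1 C by simp
qed

end
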